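(* Let $i\ge 3$ and $k\ge 3$ be integers. Then: (a) $n_2(F_i,F_{i+2},F_{i+k})=\tfrac12\bigl(5F_iF_{i+2}-F_i-F_{i+2}+1\bigr)$ whenever $k\ge i+3$; (b) $n_2(F_i,F_{i+2},F_{2i+2})=\tfrac12\bigl((7F_{i+2}-6F_i-1)F_i-F_{i+2}+1\bigr)$; (c) $n_2(F_i,F_{i+2},F_{2i+1})=\tfrac12\bigl((7F_{i+2}-8F_i-1)F_i-F_{i+2}+1\bigr)$; (d) $n_2(F_i,F_{i+2},F_{2i})=\tfrac12\bigl(3F_iF_{i+2}-F_i-F_{i+2}+1\bigr)$; (e) $n_2(F_i,F_{i+2},F_{2i-1})=\tfrac12\bigl((170F_i-1)F_i+(24F_{i+2}-125F_i-1)F_{i+2}+1\bigr)$; (f) if $r=\lfloor (F_i-1)/F_k\rfloor\ge 2$ (equivalently $k\le i-2$), then $$n_2(F_i,F_{i+2},F_{i+k})=\tfrac12\bigl((F_i+4F_k-1)F_{i+2}-F_i+1\bigr)-\tfrac12\bigl(2rF_i-(r+3)(r-2)F_k\bigr)F_{k-2}.$$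
   Context: Fibonacci numbers: $F_0=0$, $F_1=1$, $F_n=F_{n-1}+F_{n-2}$. For positive integers $a_1,\dots,a_l$ with $\gcd(a_1,\dots,a_l)=1$ and an integer $n$, let $d(n;a_1,\dots,a_l)$ be the number of tuples $(x_1,\dots,x_l)$ of nonnegative integers with $a_1x_1+\dots+a_lx_l=n$. For a nonnegative integer $p$, the $p$-Sylvester number $n_p(a_1,\dots,a_l)$ is the number of nonnegative integers $n$ with $d(n;a_1,\dots,a_l)\le p$. *)

theory Defs
  imports "HOL-Number_Theory.Fib"
begin

definition num_reps :: "nat \<Rightarrow> nat list \<Rightarrow> nat" where
  "num_reps n as = card {xs :: nat list. length xs = length as \<and>
      (\<Sum>j<length as. as ! j * xs ! j) = n}"

definition sylvester_p :: "nat \<Rightarrow> nat list \<Rightarrow> nat" where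
  "sylvester_p p as = card {n :: nat. num_reps n as \<le> p}"

end

theory Submission
  imports Defs "HOL-Number_Theory.Cong"
begin


lemma len3: "length xs = 3 \<Longrightarrow> \<exists>x y z. xs = [x,y,z]"
  by (cases xs; cases "tl xs"; cases "tl (tl xs)") (auto simp: numeral_3_eq_3)

lemma sum3: "(\<Sum>j<(3::nat). f j) = f 0 + f 1 + (f 2 :: nat)"
  by (simp add: numeral_3_eq_3 numeral_2_eq_2 lessThan_Suc)

lemma num_reps3: "num_reps n [a,b,c] = card {(x,y,z). a*x + b*y + c*z = n}"
proof -
  have "{xs :: nat list. length xs = length [a,b,c] \<and> (\<Sum>j<length [a,b,c]. [a,b,c] ! j * xs ! j) = n}
      = (\<lambda>(x,y,z). [x,y,z]) ` {(x,y,z). a*x + b*y + c*z = n}"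
  proof (rule set_eqI, rule iffI)
    fix xs assume "xs \<in> {xs :: nat list. length xs = length [a,b,c] \<and> (\<Sum>j<length [a,b,c]. [a,b,c] ! j * xs ! j) = n}"
    then have l: "length xs = 3" and s: "a*xs!0 + b*xs!Suc 0 + c*xs!Suc (Suc 0) = n" by auto
    obtain x y z where xs: "xs = [x,y,z]" using len3[OF l] by blast
    then show "xs \<in> (\<lambda>(x,y,z). [x,y,z]) ` {(x,y,z). a*x + b*y + c*z = n}"
      using s xs by (auto intro!: image_eqI[of _ _ "(x,y,z)"])
  next
    fix xs assume "xs \<in> (\<lambda>(x,y,z). [x,y,z]) ` {(x,y,z). a*x + b*y + c*z = n}"
    then obtain x y z where xs: "xs = [x,y,z]" and e: "a*x + b*y + c*z = n" by auto
    show "xs \<in> {xs :: nat list. length xs = length [a,b,c] \<and> (\<Sum>j<length [a,b,c]. [a,b,c] ! j * xs ! j) = n}"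
      using e xs by simp
  qed
  moreover have "inj_on (\<lambda>(x::nat,y::nat,z::nat). [x,y,z]) {(x,y,z). a*x + b*y + c*z = n}"
    by (auto simp: inj_on_def)
  ultimately show ?thesis unfolding num_reps_def by (simp add: card_image)
qed

lemma reps_finite:
  assumes "a > 0" "b > 0" "c > 0"
  shows "finite {(x,y,z). a*x + b*y + c*z = (n::nat)}"
proof -
  have *: "x \<le> n \<and> y \<le> n \<and> z \<le> n" if "a*x+b*y+c*z = n" for x y z
  proof -
    have "x \<le> a*x" "y \<le> b*y" "z \<le> c*z" using assms by auto
    then show ?thesis using that by linarith
  qed
  have "{(x,y,z). a*x + b*y + c*z = n} \<subseteq> {..n} \<times> {..n} \<times> {..n}"
    using * by auto
  then show ?thesis by (rule finite_subset) auto
qed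



lemma reps_param:
  fixes a b c \<alpha> s n :: nat and \<beta> u :: int
  assumes a0: "a > 0" and b0: "b > 0" and c0: "c > 0" and cop: "coprime a b"
    and cdef: "int c = int \<alpha> * int b - \<beta> * int a" and s: "s < a"
    and n: "int b * int s + int a * u = int n"
  shows "card {(x,y,z). a*x+b*y+c*z = n} = card {(z,m). \<alpha>*z \<le> s + a*m \<and> int b * int m - \<beta> * int z \<le> u}"
    and "finite {(z,m). \<alpha>*z \<le> s + a*m \<and> int b * int m - \<beta> * int z \<le> u}"
proof -
  define S where "S = {(z,m). \<alpha>*z \<le> s + a*m \<and> int b * int m - \<beta> * int z \<le> u}"
  define R where "R = {(x,y,z). a*x+b*y+c*z = n}"
  define h where "h = (\<lambda>(z::nat,m::nat). (nat (u - (int b * int m - \<beta> * int z)), s + a*m - \<alpha>*z, z))"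
  have inj: "inj_on h S"
  proof (rule inj_onI)
    fix p q assume "p \<in> S" "q \<in> S" "h p = h q"
    obtain z m z' m' where p: "p = (z,m)" and q: "q = (z',m')" by fastforce
    have "z = z'" using \<open>h p = h q\<close> by (simp add: h_def p q)
    moreover have "s + a*m - \<alpha>*z = s + a*m' - \<alpha>*z'" using \<open>h p = h q\<close> by (auto simp: h_def p q)
    moreover have "\<alpha>*z \<le> s + a*m" "\<alpha>*z' \<le> s + a*m'" using \<open>p \<in> S\<close> \<open>q \<in> S\<close> by (auto simp: S_def p q)
    ultimately have "s + a*m - \<alpha>*z = s + a*m' - \<alpha>*z" "\<alpha>*z \<le> s + a*m" "\<alpha>*z \<le> s + a*m'" by auto
    then have "a*m = a*m'" by linarith
    then have "m = m'" using a0 by simp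
    then show "p = q" using \<open>z = z'\<close> p q by simp
  qed
  have img: "h ` S = R"
  proof (rule set_eqI, rule iffI)
    fix r assume "r \<in> h ` S"
    then obtain z m where zm: "(z,m) \<in> S" and r: "r = h (z,m)" by auto
    have le: "\<alpha>*z \<le> s + a*m" and W: "int b * int m - \<beta> * int z \<le> u" using zm by (auto simp: S_def)
    have "int (a * nat (u - (int b * int m - \<beta> * int z)) + b * (s + a*m - \<alpha>*z) + c*z)
        = int a * (u - (int b * int m - \<beta> * int z)) + int b * (int s + int a * int m - int \<alpha> * int z) + int c * int z"
      using le W by (simp add: of_nat_diff)
    also have "\<dots> = int n" using n by (simp add: cdef algebra_simps)
    finally have "a * nat (u - (int b * int m - \<beta> * int z)) + b * (s + a*m - \<alpha>*z) + c*z = n"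
      by (simp only: of_nat_eq_iff)
    then show "r \<in> R" by (simp add: R_def r h_def)
  next
    fix r assume "r \<in> R"
    then obtain x y z where r: "r = (x,y,z)" and e: "a*x+b*y+c*z = n" by (auto simp: R_def)
    define t where "t = int y + int \<alpha> * int z - int s"
    have ei: "int a * int x + int b * int y + int c * int z = int n" using e by (metis of_nat_add of_nat_mult)
    have bt: "int b * t = int a * (u - int x + \<beta> * int z)"
      using ei n cdef unfolding t_def by (simp add: algebra_simps)
    have copi: "coprime (int a) (int b)" using cop by simp
    have "int a dvd int b * t" using bt by simp
    then have "int a dvd t" using copi by (simp add: coprime_dvd_mult_right_iff)
    then obtain m where tm: "t = int a * m" by (auto elim: dvdE)
    have "int \<alpha> * int z \<ge> 0" by simp
    then have "int a * m > - int a" using tm s unfolding t_def by linarith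
    then have m0: "m \<ge> 0"
    proof -
      assume h: "int a * m > - int a"
      show "m \<ge> 0"
      proof (rule ccontr)
        assume "\<not> m \<ge> 0" then have "m \<le> -1" by simp
        then have "int a * m \<le> int a * (-1)" by (intro mult_left_mono) auto
        then show False using h by simp
      qed
    qed
    define mn where "mn = nat m"
    have mm: "int mn = m" using m0 by (simp add: mn_def)
    have le: "\<alpha>*z \<le> s + a*mn"
    proof -
      have "int (\<alpha>*z) \<le> int (s + a*mn)" using tm mm unfolding t_def by simp
      then show ?thesis by linarith
    qed
    have yeq: "y = s + a*mn - \<alpha>*z"
    proof -
      have "int y = int (s + a*mn) - int (\<alpha>*z)" using tm mm unfolding t_def by simp
      then show ?thesis using le by linarith
    qed
    have "int a * (u - (int b * m - \<beta> * int z)) = int a * int x"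
      using bt tm by (simp add: algebra_simps)
    then have xeq: "u - (int b * m - \<beta> * int z) = int x" using a0 by simp
    have "(z,mn) \<in> S" using le xeq mm by (simp add: S_def)
    moreover have "h (z,mn) = r" using xeq yeq mm by (simp add: h_def r)
    ultimately show "r \<in> h ` S" by force
  qed
  have fR: "finite R" unfolding R_def using reps_finite[OF a0 b0 c0] .
  show "card R = card S" using card_image[OF inj] img by simp
  show "finite S" using finite_imageD[of h S] fR img inj by simp
qed



lemma pair_floor:
  fixes a b s :: nat
  assumes cop: "coprime a b" and s: "0 < s" "s < a"
  shows "b*s div a + b*(a-s) div a = b - 1"
proof -
  define r1 where "r1 = b*s mod a"
  define r2 where "r2 = b*(a-s) mod a"
  have a0: "a > 0" using s by simp
  have r1: "r1 \<noteq> 0"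
  proof
    assume "r1 = 0"
    then have "a dvd b*s" unfolding r1_def by (simp add: mod_eq_0_iff_dvd)
    then have "a dvd s" using cop by (simp add: coprime_dvd_mult_right_iff)
    then show False using s by (auto dest: dvd_imp_le)
  qed
  have sum: "b*s + b*(a-s) = a*b" using s by (simp add: algebra_simps diff_mult_distrib2)
  have "(r1 + r2) mod a = 0"
  proof -
    have "(r1 + r2) mod a = (b*s + b*(a-s)) mod a" unfolding r1_def r2_def by (simp add: mod_add_eq)
    also have "\<dots> = 0" using sum by simp
    finally show ?thesis .
  qed
  moreover have "r1 < a" "r2 < a" using a0 by (auto simp: r1_def r2_def)
  ultimately have "r1 + r2 = a"
  proof -
    assume m: "(r1 + r2) mod a = 0" and l: "r1 < a" "r2 < a"
    have lt: "r1 + r2 < 2*a" "r1 + r2 > 0" using l r1 by auto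
    obtain k where k: "r1 + r2 = a*k" using m by (auto simp: mod_eq_0_iff_dvd elim: dvdE)
    have "k > 0" using k lt by (cases k) auto
    moreover have "k < 2" using k lt a0 by (metis mult.commute mult_less_cancel2)
    ultimately have "k = 1" by simp
    then show ?thesis using k by simp
  qed
  have e1: "b*s = a*(b*s div a) + r1" unfolding r1_def by simp
  have e2: "b*(a-s) = a*(b*(a-s) div a) + r2" unfolding r2_def by simp
  have "a*(b*s div a + b*(a-s) div a) + a = a*b"
    using e1 e2 sum \<open>r1 + r2 = a\<close> by (simp add: algebra_simps)
  then have "a*(b*s div a + b*(a-s) div a + 1) = a*b" by (simp add: algebra_simps)
  then have "b*s div a + b*(a-s) div a + 1 = b" using a0 mult_left_cancel[of a] by (metis not_gr0)
  then show ?thesis by simp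
qed

lemma floor_sum:
  fixes a b :: nat
  assumes cop: "coprime a b" and a0: "a > 0"
  shows "2 * (\<Sum>s<a. b*s div a) = (a-1)*(b-1)"
proof -
  have "(\<Sum>s<a. b*s div a) = (\<Sum>s\<in>{1..<a}. b*s div a)"
  proof -
    have "{..<a} = insert 0 {1..<a}" using a0 by auto
    then show ?thesis by simp
  qed
  moreover have "(\<Sum>s\<in>{1..<a}. b*s div a) = (\<Sum>s\<in>{1..<a}. b*(a-s) div a)"
    by (subst sum.atLeastLessThan_rev) (rule sum.cong, auto)
  ultimately have "2 * (\<Sum>s<a. b*s div a) = (\<Sum>s\<in>{1..<a}. b*s div a + b*(a-s) div a)"
    by (simp add: sum.distrib)
  also have "\<dots> = (\<Sum>s\<in>{1..<a}. b - 1)"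
    by (rule sum.cong, simp, rule pair_floor[OF cop], auto)
  also have "\<dots> = (a-1)*(b-1)" by simp
  finally show ?thesis .
qed



lemma nonneg_iff_div:
  fixes A :: int and a :: nat and u :: int
  assumes "a > 0" "A \<ge> 0"
  shows "A + int a * u \<ge> 0 \<longleftrightarrow> u \<ge> - (A div int a)"
proof -
  have e: "A = int a * (A div int a) + A mod int a" by simp
  have r: "0 \<le> A mod int a" "A mod int a < int a" using assms by auto
  have "A + int a * u = int a * (u + A div int a) + A mod int a" using e by (simp add: algebra_simps)
  moreover have "int a * (u + A div int a) + A mod int a \<ge> 0 \<longleftrightarrow> u + A div int a \<ge> 0"
  proof
    assume h: "int a * (u + A div int a) + A mod int a \<ge> 0"
    show "u + A div int a \<ge> 0"
    proof (rule ccontr)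
      assume "\<not> u + A div int a \<ge> 0" then have "u + A div int a \<le> -1" by simp
      then have "int a * (u + A div int a) \<le> int a * (-1)" using assms by (intro mult_left_mono) auto
      then show False using h r by simp
    qed
  next
    assume "u + A div int a \<ge> 0"
    then show "int a * (u + A div int a) + A mod int a \<ge> 0" using r by simp
  qed
  ultimately show ?thesis by linarith
qed

lemma core:
  fixes a b c \<alpha> :: nat and \<beta> :: int and w :: "nat \<Rightarrow> int"
  assumes a0: "a > 0" and b0: "b > 0" and c0: "c > 0" and cop: "coprime a b"
    and cdef: "int c = int \<alpha> * int b - \<beta> * int a"
    and three: "\<And>s. s < a \<Longrightarrow> \<exists>p1 p2 p3. p1 \<noteq> p2 \<and> p1 \<noteq> p3 \<and> p2 \<noteq> p3 \<and>
        (\<forall>p\<in>{p1,p2,p3}. \<alpha> * fst p \<le> s + a * snd p \<and> int b * int (snd p) - \<beta> * int (fst p) \<le> w s)"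
    and two: "\<And>s. s < a \<Longrightarrow> \<exists>q1 q2. \<forall>z m. \<alpha> * z \<le> s + a * m \<longrightarrow>
        int b * int m - \<beta> * int z < w s \<longrightarrow> (z,m) = q1 \<or> (z,m) = q2"
  shows "2 * int (sylvester_p 2 [a,b,c]) = int ((a-1)*(b-1)) + 2 * (\<Sum>s<a. w s)"
proof -
  define S where "S = (\<lambda>s u. {(z,m). \<alpha>*z \<le> s + a*m \<and> int b * int m - \<beta> * int z \<le> u})"
  define L where "L = (\<lambda>s::nat. - (int b * int s div int a))"
  have cnt: "num_reps n [a,b,c] = card (S s u) \<and> finite (S s u)"
    if "s < a" "int b * int s + int a * u = int n" for s u n
    using reps_param[OF a0 b0 c0 cop cdef that] num_reps3[of n a b c] unfolding S_def by simp
  have low: "int b * int s + int a * (int b * int m - \<beta> * int z) \<ge> 0"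
    if "\<alpha>*z \<le> s + a*m" for s z m
  proof -
    have "int b * int s + int a * (int b * int m - \<beta> * int z)
        = int b * (int s + int a * int m - int \<alpha> * int z) + int c * int z"
      by (simp add: cdef algebra_simps)
    also have "\<dots> \<ge> 0" using that by (intro add_nonneg_nonneg mult_nonneg_nonneg) (simp_all add: of_nat_mult[symmetric] del: of_nat_mult)
    finally show ?thesis .
  qed
  have nn: "int b * int s + int a * u \<ge> 0 \<longleftrightarrow> u \<ge> L s" for s u
    unfolding L_def by (rule nonneg_iff_div[OF a0]) simp
  have key: "num_reps n [a,b,c] \<le> 2 \<longleftrightarrow> u < w s"
    if s: "s < a" and n: "int b * int s + int a * u = int n" for s u n
  proof -
    have c1: "num_reps n [a,b,c] = card (S s u)" and fin: "finite (S s u)" using cnt[OF s n] by auto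
    show ?thesis
    proof
      assume le: "num_reps n [a,b,c] \<le> 2"
      show "u < w s"
      proof (rule ccontr)
        assume "\<not> u < w s"
        obtain p1 p2 p3 where d: "p1 \<noteq> p2" "p1 \<noteq> p3" "p2 \<noteq> p3" and
          P: "\<forall>p\<in>{p1,p2,p3}. \<alpha> * fst p \<le> s + a * snd p \<and> int b * int (snd p) - \<beta> * int (fst p) \<le> w s"
          using three[OF s] by blast
        have "{p1,p2,p3} \<subseteq> S s u" using P \<open>\<not> u < w s\<close> unfolding S_def by force
        then have "card {p1,p2,p3} \<le> card (S s u)" using fin by (rule card_mono[rotated])
        then show False using d c1 le by simp
      qed
    next
      assume "u < w s"
      obtain q1 q2 where Q: "\<forall>z m. \<alpha> * z \<le> s + a * m \<longrightarrow>
        int b * int m - \<beta> * int z < w s \<longrightarrow> (z,m) = q1 \<or> (z,m) = q2" using two[OF s] by blast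
      have "S s u \<subseteq> {q1,q2}" using Q \<open>u < w s\<close> unfolding S_def by force
      then have "card (S s u) \<le> card {q1,q2}" by (rule card_mono[rotated]) simp
      also have "\<dots> \<le> 2" by (simp add: card_insert_le_m1)
      finally show "num_reps n [a,b,c] \<le> 2" using c1 by simp
    qed
  qed
  have wL: "L s \<le> w s" if s: "s < a" for s
  proof -
    obtain p1 p2 p3 where
      P: "\<forall>p\<in>{p1,p2,p3}. \<alpha> * fst p \<le> s + a * snd p \<and> int b * int (snd p) - \<beta> * int (fst p) \<le> w s"
      using three[OF s] by blast
    obtain z m where p1: "p1 = (z,m)" by fastforce
    have "\<alpha>*z \<le> s + a*m" "int b * int m - \<beta> * int z \<le> w s" using P p1 by auto
    then show ?thesis using low nn by fastforce
  qed
  define Dm where "Dm = (SIGMA s:{..<a}. {L s..<w s})"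
  define phi where "phi = (\<lambda>(s::nat,u::int). nat (int b * int s + int a * u))"
  have bij: "bij_betw phi Dm {n. num_reps n [a,b,c] \<le> 2}"
  proof (rule bij_betw_imageI)
    show "inj_on phi Dm"
    proof (rule inj_onI)
      fix p q assume pD: "p \<in> Dm" and qD: "q \<in> Dm" and e: "phi p = phi q"
      obtain s u s' u' where p: "p = (s,u)" and q: "q = (s',u')" by fastforce
      have s: "s < a" "s' < a" and u: "L s \<le> u" "L s' \<le> u'" using pD qD by (auto simp: Dm_def p q)
      have g1: "int b * int s + int a * u \<ge> 0" "int b * int s' + int a * u' \<ge> 0" using nn u by auto
      have "int b * int s + int a * u = int b * int s' + int a * u'"
        using e g1 eq_nat_nat_iff by (simp add: phi_def p q)
      then have E: "int b * (int s - int s') = int a * (u' - u)" by (simp add: algebra_simps)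
      have "int a dvd int b * (int s - int s')" using E by simp
      then have "int a dvd (int s - int s')" using cop by (simp add: coprime_dvd_mult_right_iff)
      then obtain k where k: "int s - int s' = int a * k" by (auto elim: dvdE)
      have "k = 0"
      proof (rule ccontr)
        assume "k \<noteq> 0"
        then have "\<bar>int a * k\<bar> \<ge> int a" using a0 by (simp add: abs_mult)
        then show False using k s by linarith
      qed
      then have "s = s'" using k by simp
      then have "u = u'" using E a0 by simp
      then show "p = q" using \<open>s = s'\<close> p q by simp
    qed
  next
    show "phi ` Dm = {n. num_reps n [a,b,c] \<le> 2}"
    proof (rule set_eqI, rule iffI)
      fix n assume "n \<in> phi ` Dm"
      then obtain s u where s: "s < a" and u: "L s \<le> u" "u < w s" and n: "n = phi (s,u)"
        by (auto simp: Dm_def)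
      have "int b * int s + int a * u = int n" using nn u n by (simp add: phi_def)
      then show "n \<in> {n. num_reps n [a,b,c] \<le> 2}" using key[OF s] u by blast
    next
      fix n assume nin: "n \<in> {n. num_reps n [a,b,c] \<le> 2}"
      obtain x where x: "[b * x = Suc 0] (mod a)" using cong_solve_coprime_nat[of b a] cop
        by (auto simp: coprime_commute)
      define s where "s = (n * x) mod a"
      have s: "s < a" using a0 by (simp add: s_def)
      have "(b * s) mod a = (n * (b * x)) mod a"
        unfolding s_def by (simp add: mod_mult_right_eq mult.commute mult.left_commute)
      also have "\<dots> = (n * Suc 0) mod a" using x unfolding cong_def by (metis mod_mult_right_eq)
      finally have "(b * s) mod a = n mod a" by simp
      then have "int a dvd int n - int b * int s"
        by (metis mod_eq_dvd_iff of_nat_mod of_nat_mult zmod_int)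
      then obtain u where u: "int n - int b * int s = int a * u" by (auto elim: dvdE)
      have nu: "int b * int s + int a * u = int n" using u by simp
      have "L s \<le> u" using nn[of s u] nu by simp
      moreover have "u < w s" using key[OF s nu] nin by simp
      moreover have "phi (s,u) = n" using nu by (simp add: phi_def)
      ultimately show "n \<in> phi ` Dm" using s unfolding Dm_def by force
    qed
  qed
  have "sylvester_p 2 [a,b,c] = card Dm"
    unfolding sylvester_p_def using bij_betw_same_card[OF bij] by simp
  also have "card Dm = (\<Sum>s<a. card {L s..<w s})"
    unfolding Dm_def by (rule card_SigmaI) auto
  finally have "int (sylvester_p 2 [a,b,c]) = (\<Sum>s<a. w s - L s)"
    using wL by simp
  also have "\<dots> = (\<Sum>s<a. w s) + (\<Sum>s<a. int (b * s div a))"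
    unfolding L_def by (simp add: sum.distrib sum_subtractf zdiv_int)
  also have "(\<Sum>s<a. int (b * s div a)) = int (\<Sum>s<a. b * s div a)" by simp
  finally have "2 * int (sylvester_p 2 [a,b,c]) = 2 * (\<Sum>s<a. w s) + int (2 * (\<Sum>s<a. b * s div a))"
    by simp
  then show ?thesis using floor_sum[OF cop a0] by simp
qed



lemma sum_split_const:
  fixes X Y :: int
  assumes "e \<le> a"
  shows "(\<Sum>s<a. if e \<le> s then X else Y) = int e * Y + int (a - e) * X"
proof -
  have u: "{..<a} = {..<e} \<union> {e..<a}" using assms by auto
  have "(\<Sum>s<a. if e \<le> s then X else Y) = (\<Sum>s<e. if e \<le> s then X else Y) + (\<Sum>s\<in>{e..<a}. if e \<le> s then X else Y)"
    unfolding u by (rule sum.union_disjoint) auto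
  also have "(\<Sum>s<e. if e \<le> s then X else Y) = (\<Sum>s<e. Y)" by (rule sum.cong) auto
  also have "(\<Sum>s\<in>{e..<a}. if e \<le> s then X else Y) = (\<Sum>s\<in>{e..<a}. X)" by (rule sum.cong) auto
  finally show ?thesis by simp
qed

lemma shapeA:
  fixes a b c \<alpha> g :: nat
  assumes a0: "a > 0" and b0: "b > 0" and c0: "c > 0" and cop: "coprime a b"
    and cdef: "int c = int \<alpha> * int b - int g * int a"
    and big: "int c \<ge> 3 * int a * int b - int b"
  shows "2 * int (sylvester_p 2 [a,b,c]) = int ((a-1)*(b-1)) + 4 * int a * int b"
proof -
  have "2 * int (sylvester_p 2 [a,b,c]) = int ((a-1)*(b-1)) + 2 * (\<Sum>s<a. 2 * int b)"
  proof (rule core[OF a0 b0 c0 cop cdef])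
    fix s assume s: "s < a"
    show "\<exists>p1 p2 p3. p1 \<noteq> p2 \<and> p1 \<noteq> p3 \<and> p2 \<noteq> p3 \<and>
        (\<forall>p\<in>{p1,p2,p3}. \<alpha> * fst p \<le> s + a * snd p \<and> int b * int (snd p) - int g * int (fst p) \<le> 2 * int b)"
      by (rule exI[of _ "(0,0)"], rule exI[of _ "(0,1)"], rule exI[of _ "(0,2)"]) auto
  next
    fix s assume s: "s < a"
    have "(z,m) = (0,0) \<or> (z,m) = (0,1)"
      if zm: "\<alpha> * z \<le> s + a * m" "int b * int m - int g * int z < 2 * int b" for z m
    proof (cases "z = 0")
      case True
      then have "int b * int m < int b * 2" using zm by simp
      then have "m < 2" using b0 by (simp only: mult_less_cancel_left) simp
      then show ?thesis using True by auto
    next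
      case False
      have am: "int a * int m \<ge> int \<alpha> * int z - int s"
        using zm(1) by (simp add: of_nat_mult[symmetric] del: of_nat_mult)
      have h1: "int a * (int b * int m - int g * int z) = int b * (int a * int m) - int g * int a * int z"
        by (simp add: algebra_simps)
      have h2: "int b * (int a * int m) \<ge> int b * (int \<alpha> * int z - int s)"
        using am b0 by (simp add: mult_left_mono)
      have h3: "int b * (int \<alpha> * int z - int s) - int g * int a * int z = int c * int z - int b * int s"
        by (simp add: cdef algebra_simps)
      have h4: "int c * int z \<ge> int c" using False c0 by simp
      have h5: "int b * int s \<le> int b * (int a - 1)" using s b0 by (intro mult_left_mono) auto
      have h6: "int b * (int a - 1) = int a * int b - int b" by (simp add: algebra_simps)
      have "int a * (int b * int m - int g * int z) \<ge> int a * (2 * int b)"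
        using h1 h2 h3 h4 h5 h6 big by (simp add: algebra_simps)
      then have "int b * int m - int g * int z \<ge> 2 * int b" using a0 by simp
      then show ?thesis using zm by simp
    qed
    then show "\<exists>q1 q2. \<forall>z m. \<alpha> * z \<le> s + a * m \<longrightarrow>
        int b * int m - int g * int z < 2 * int b \<longrightarrow> (z,m) = q1 \<or> (z,m) = q2" by blast
  qed
  then show ?thesis by simp
qed



lemma ge_mul: "(k::nat) \<le> m \<Longrightarrow> (x::int) \<ge> 0 \<Longrightarrow> x * int m \<ge> x * int k"
  by (intro mult_left_mono) auto

lemma pos: "0 \<le> int x * int y" by simp

lemma ge1: "(m::nat) \<noteq> 0 \<Longrightarrow> (x::int) \<ge> 0 \<Longrightarrow> x * int m \<ge> x * 1"
  using ge_mul[of 1 m x] by simp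

lemma ge2: "\<not> (m::nat) < 2 \<Longrightarrow> (x::int) \<ge> 0 \<Longrightarrow> x * int m \<ge> x * 2"
  using ge_mul[of 2 m x] by simp

lemma shapeB:
  fixes a b c e h :: nat
  assumes a0: "a > 0" and b0: "b > 0" and c0: "c > 0" and cop: "coprime a b"
    and cdef: "int c = int e * int b + int h * int a"
    and ea: "e \<le> a" and bh: "b \<le> h" and hb: "h \<le> 2 * b"
  shows "2 * int (sylvester_p 2 [a,b,c]) = int ((a-1)*(b-1)) + 2 * (int e * (2 * int b) + int (a - e) * int h)"
proof -
  define w where "w = (\<lambda>s::nat. if e \<le> s then int h else 2 * int b)"
  have cd: "int c = int e * int b - (- int h) * int a" using cdef by simp
  have "2 * int (sylvester_p 2 [a,b,c]) = int ((a-1)*(b-1)) + 2 * (\<Sum>s<a. w s)"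
  proof (rule core[OF a0 b0 c0 cop cd])
    fix s assume s: "s < a"
    show "\<exists>p1 p2 p3. p1 \<noteq> p2 \<and> p1 \<noteq> p3 \<and> p2 \<noteq> p3 \<and>
        (\<forall>p\<in>{p1,p2,p3}. e * fst p \<le> s + a * snd p \<and> int b * int (snd p) - (- int h) * int (fst p) \<le> w s)"
    proof (cases "e \<le> s")
      case True
      then show ?thesis
        by (rule_tac exI[of _ "(0,0)"], rule_tac exI[of _ "(0,1)"], rule_tac exI[of _ "(1,0)"]) (use bh in \<open>auto simp: w_def\<close>)
    next
      case False
      then show ?thesis
        by (rule_tac exI[of _ "(0,0)"], rule_tac exI[of _ "(0,1)"], rule_tac exI[of _ "(0,2)"]) (auto simp: w_def)
    qed
  next
    fix s assume s: "s < a"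
    have "(z,m) = (0,0) \<or> (z,m) = (0,1)"
      if zm: "e * z \<le> s + a * m" "int b * int m - (- int h) * int z < w s" for z m
    proof (cases "e \<le> s")
      case True
      then have W: "int b * int m + int h * int z < int h" using zm by (simp add: w_def)
      have "z = 0"
      proof (rule ccontr)
        assume "z \<noteq> 0"
        then have "int h * int z \<ge> int h * 1" by (rule ge1) auto
        then show False using W pos[of b m] pos[of h z] pos[of a z] pos[of L z] by linarith
      qed
      moreover have "m < 2"
      proof (rule ccontr)
        assume "\<not> m < 2"
        then have "int b * int m \<ge> int b * 2" by (rule ge2) auto
        then show False using W hb pos[of b m] pos[of h z] pos[of a z] pos[of L z] by linarith
      qed
      ultimately show ?thesis by auto
    next
      case False
      then have W: "int b * int m + int h * int z < 2 * int b" using zm by (simp add: w_def)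
      show ?thesis
      proof (cases "m = 0")
        case True
        then have "z = 0" using zm False by (cases z) auto
        then show ?thesis using True by simp
      next
        case m0: False
        have "int b * int m \<ge> int b * 1" using m0 by (rule ge1) auto
        have "z = 0"
        proof (rule ccontr)
          assume "z \<noteq> 0"
          then have "int h * int z \<ge> int h * 1" by (rule ge1) auto
          then show False using W bh \<open>int b * int m \<ge> int b * 1\<close> pos[of b m] pos[of h z] pos[of a z] pos[of L z] by linarith
        qed
        moreover have "m < 2"
        proof (rule ccontr)
          assume "\<not> m < 2"
          then have "int b * int m \<ge> int b * 2" by (rule ge2) auto
          then show False using W pos[of b m] pos[of h z] pos[of a z] pos[of L z] by linarith
        qed
        ultimately show ?thesis using m0 by auto
      qed
    qed
    then show "\<exists>q1 q2. \<forall>z m. e * z \<le> s + a * m \<longrightarrow>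
        int b * int m - (- int h) * int z < w s \<longrightarrow> (z,m) = q1 \<or> (z,m) = q2" by blast
  qed
  also have "(\<Sum>s<a. w s) = int e * (2 * int b) + int (a - e) * int h"
    unfolding w_def by (rule sum_split_const[OF ea])
  finally show ?thesis .
qed

lemma shapeC:
  fixes a b c e :: nat
  assumes a0: "a > 0" and b0: "b > 0" and c0: "c > 0" and cop: "coprime a b"
    and cdef: "int c = int e * int b + 2 * int a * int a"
    and ea: "e \<le> a" and ab: "2 * a \<le> b" and ba: "b \<le> 4 * a"
  shows "2 * int (sylvester_p 2 [a,b,c]) = int ((a-1)*(b-1)) + 2 * (int e * (2 * int a + int b) + int (a - e) * int b)"
proof -
  define w where "w = (\<lambda>s::nat. if e \<le> s then int b else 2 * int a + int b)"
  have cd: "int c = int e * int b - (- (2 * int a)) * int a" using cdef by simp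
  have "2 * int (sylvester_p 2 [a,b,c]) = int ((a-1)*(b-1)) + 2 * (\<Sum>s<a. w s)"
  proof (rule core[OF a0 b0 c0 cop cd])
    fix s assume s: "s < a"
    show "\<exists>p1 p2 p3. p1 \<noteq> p2 \<and> p1 \<noteq> p3 \<and> p2 \<noteq> p3 \<and>
        (\<forall>p\<in>{p1,p2,p3}. e * fst p \<le> s + a * snd p \<and> int b * int (snd p) - (- (2 * int a)) * int (fst p) \<le> w s)"
    proof (cases "e \<le> s")
      case True
      then show ?thesis
        by (rule_tac exI[of _ "(0,0)"], rule_tac exI[of _ "(0,1)"], rule_tac exI[of _ "(1,0)"]) (use ab in \<open>auto simp: w_def\<close>)
    next
      case False
      then show ?thesis
        by (rule_tac exI[of _ "(0,0)"], rule_tac exI[of _ "(0,1)"], rule_tac exI[of _ "(1,1)"]) (use ea in \<open>auto simp: w_def\<close>)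
    qed
  next
    fix s assume s: "s < a"
    have "(if e \<le> s then (z,m) = (0,0) \<or> (z,m) = (1,0) else (z,m) = (0,0) \<or> (z,m) = (0,1))"
      if zm: "e * z \<le> s + a * m" "int b * int m - (- (2 * int a)) * int z < w s" for z m
    proof (cases "e \<le> s")
      case True
      then have W: "int b * int m + 2 * int a * int z < int b" using zm by (simp add: w_def)
      have "m = 0"
      proof (rule ccontr)
        assume "m \<noteq> 0"
        then have "int b * int m \<ge> int b * 1" by (rule ge1) auto
        then show False using W pos[of b m] pos[of h z] pos[of a z] pos[of L z] by linarith
      qed
      moreover have "z < 2"
      proof (rule ccontr)
        assume "\<not> z < 2"
        then have "(2 * int a) * int z \<ge> (2 * int a) * 2" by (rule ge2) auto
        then show False using W ba pos[of b m] pos[of h z] pos[of a z] pos[of L z] by linarith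
      qed
      ultimately show ?thesis using True by auto
    next
      case False
      then have W: "int b * int m + 2 * int a * int z < 2 * int a + int b" using zm by (simp add: w_def)
      show ?thesis
      proof (cases "m = 0")
        case True
        then have "z = 0" using zm False by (cases z) auto
        then show ?thesis using True False by simp
      next
        case m0: False
        have "m < 2"
        proof (rule ccontr)
          assume "\<not> m < 2"
          then have "int b * int m \<ge> int b * 2" by (rule ge2) auto
          then show False using W ab pos[of b m] pos[of h z] pos[of a z] pos[of L z] by linarith
        qed
        then have "m = 1" using m0 by simp
        moreover have "z = 0"
        proof (rule ccontr)
          assume "z \<noteq> 0"
          then have "(2 * int a) * int z \<ge> (2 * int a) * 1" by (rule ge1) auto
          moreover have "int b + 2 * int a * int z < 2 * int a + int b" using W \<open>m = 1\<close> by simp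
          ultimately show False by linarith
        qed
        ultimately show ?thesis using False by auto
      qed
    qed
    then show "\<exists>q1 q2. \<forall>z m. e * z \<le> s + a * m \<longrightarrow>
        int b * int m - (- (2 * int a)) * int z < w s \<longrightarrow> (z,m) = q1 \<or> (z,m) = q2"
      by (cases "e \<le> s") (metis, metis)
  qed
  also have "(\<Sum>s<a. w s) = int e * (2 * int a + int b) + int (a - e) * int b"
    unfolding w_def by (rule sum_split_const[OF ea])
  finally show ?thesis .
qed

lemma shapeD:
  fixes a b c L :: nat
  assumes a0: "a > 0" and b0: "b > 0" and c0: "c > 0" and cop: "coprime a b"
    and cdef: "int c = int L * int a"
    and Lb: "L \<le> b" and bL: "b \<le> 2 * L"
  shows "2 * int (sylvester_p 2 [a,b,c]) = int ((a-1)*(b-1)) + 2 * int a * int b"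
proof -
  have cd: "int c = int 0 * int b - (- int L) * int a" using cdef by simp
  have "2 * int (sylvester_p 2 [a,b,c]) = int ((a-1)*(b-1)) + 2 * (\<Sum>s<a. int b)"
  proof (rule core[OF a0 b0 c0 cop cd])
    fix s assume s: "s < a"
    show "\<exists>p1 p2 p3. p1 \<noteq> p2 \<and> p1 \<noteq> p3 \<and> p2 \<noteq> p3 \<and>
        (\<forall>p\<in>{p1,p2,p3}. 0 * fst p \<le> s + a * snd p \<and> int b * int (snd p) - (- int L) * int (fst p) \<le> int b)"
      by (rule_tac exI[of _ "(0,0)"], rule_tac exI[of _ "(0,1)"], rule_tac exI[of _ "(1,0)"]) (use Lb in auto)
  next
    fix s assume s: "s < a"
    have "(z,m) = (0,0) \<or> (z,m) = (1,0)"
      if zm: "int b * int m - (- int L) * int z < int b" for z m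
    proof -
      have W: "int b * int m + int L * int z < int b" using zm by simp
      have "m = 0"
      proof (rule ccontr)
        assume "m \<noteq> 0"
        then have "int b * int m \<ge> int b * 1" by (rule ge1) auto
        then show False using W pos[of b m] pos[of h z] pos[of a z] pos[of L z] by linarith
      qed
      moreover have "z < 2"
      proof (rule ccontr)
        assume "\<not> z < 2"
        then have "int L * int z \<ge> int L * 2" by (rule ge2) auto
        then show False using W bL pos[of b m] pos[of h z] pos[of a z] pos[of L z] by linarith
      qed
      ultimately show ?thesis by auto
    qed
    then show "\<exists>q1 q2. \<forall>z m. 0 * z \<le> s + a * m \<longrightarrow>
        int b * int m - (- int L) * int z < int b \<longrightarrow> (z,m) = q1 \<or> (z,m) = q2" by blast
  qed
  then show ?thesis by simp
qed



definition wEF :: "nat \<Rightarrow> nat \<Rightarrow> nat \<Rightarrow> nat \<Rightarrow> nat \<Rightarrow> int" where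
  "wEF a b f g s = (if 2 \<le> s div f then - int g * (int (s div f) - 2)
     else if s div f = 1 then int b - int g * int ((s + a) div f)
     else int b - int g * (int ((s + a) div f) - 1))"

lemma keyineq:
  fixes a b c f g s z m :: nat
  assumes s: "s < a" and zm: "f * z \<le> s + a * m" and cdef: "int c = int f * int b - int g * int a"
  shows "int f * (int b * int m - int g * int z) \<ge> int m * int c - int g * (int a - 1)"
proof -
  have "int (f*z) \<le> int (s + a*m)" using zm by linarith
  then have "int f * int z \<le> int s + int a * int m" by simp
  also have "\<dots> \<le> (int a - 1) + int a * int m" using s by simp
  finally have "int g * (int f * int z) \<le> int g * ((int a - 1) + int a * int m)"
    by (intro mult_left_mono) auto
  moreover have "int f * (int b * int m - int g * int z) = int m * (int f * int b) - int g * (int f * int z)"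
    by (simp add: algebra_simps)
  moreover have "int m * int c - int g * (int a - 1) = int m * (int f * int b) - int g * ((int a - 1) + int a * int m)"
    by (simp add: cdef algebra_simps)
  ultimately show ?thesis by linarith
qed

lemma W_nonneg:
  fixes a b c f g s z m :: nat
  assumes s: "s < a" and zm: "f * z \<le> s + a * m" and cdef: "int c = int f * int b - int g * int a"
    and big: "int c \<ge> 2 * int g * int a" and f0: "f > 0" and m1: "m \<ge> 1"
  shows "int b * int m - int g * int z \<ge> 0"
proof -
  have k: "int f * (int b * int m - int g * int z) \<ge> int m * int c - int g * (int a - 1)"
    by (rule keyineq[OF s zm cdef])
  have c0: "int c \<ge> 0" by simp
  have "int m * int c \<ge> 1 * int c" using m1 c0 by (intro mult_right_mono) auto
  moreover have "int g * (int a - 1) \<le> int g * int a" by (simp add: mult_left_mono)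
  moreover have "int g * int a \<ge> 0" by simp
  ultimately have "int f * (int b * int m - int g * int z) \<ge> 0" using k big by (simp add: algebra_simps)
  then show ?thesis using f0 by (simp add: zero_le_mult_iff)
qed

lemma W_ge_b:
  fixes a b c f g s z m :: nat
  assumes s: "s < a" and zm: "f * z \<le> s + a * m" and cdef: "int c = int f * int b - int g * int a"
    and big: "int c \<ge> 2 * int g * int a" and f0: "f > 0" and m2: "m \<ge> 2"
  shows "int b * int m - int g * int z \<ge> int b"
proof -
  have k: "int f * (int b * int m - int g * int z) \<ge> int m * int c - int g * (int a - 1)"
    by (rule keyineq[OF s zm cdef])
  have c0: "int c \<ge> 0" by simp
  have "int m * int c \<ge> 2 * int c" using m2 c0 by (intro mult_right_mono) auto
  moreover have "int g * (int a - 1) \<le> int g * int a" by (simp add: mult_left_mono)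
  ultimately have "int f * (int b * int m - int g * int z) \<ge> int f * int b"
    using k big cdef by (simp add: algebra_simps)
  then show ?thesis using f0 by simp
qed

lemma bZ_nonneg:
  fixes a b c f g s :: nat
  assumes s: "s < 2 * f" and cdef: "int c = int f * int b - int g * int a"
    and big: "int c \<ge> 2 * int g * int a" and f0: "f > 0" and fa: "f \<le> a"
  shows "int b - int g * int ((s + a) div f) \<ge> 0"
proof -
  have "((s + a) div f) * f \<le> s + a" by simp
  then have "int ((s + a) div f) * int f \<le> int s + int a" by (metis of_nat_add of_nat_le_iff of_nat_mult)
  also have "\<dots> \<le> 3 * int a" using s fa by simp
  finally have "int g * (int ((s + a) div f) * int f) \<le> int g * (3 * int a)" by (intro mult_left_mono) auto
  then have "int f * (int g * int ((s + a) div f)) \<le> int f * int b" using cdef big by (simp add: algebra_simps)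
  then have "int g * int ((s + a) div f) \<le> int b" using f0 by simp
  then show ?thesis by simp
qed



lemma le_div_of_mult: "f > 0 \<Longrightarrow> f * z \<le> (s::nat) \<Longrightarrow> z \<le> s div f"
  by (simp add: less_eq_div_iff_mult_less_eq mult.commute)

lemma gmono: "(x::nat) \<le> y \<Longrightarrow> int g * int x \<le> int g * int y"
  by (intro mult_left_mono) auto

lemma shapeEF:
  fixes a b c f g :: nat
  assumes a0: "a > 0" and b0: "b > 0" and c0: "c > 0" and cop: "coprime a b"
    and f0: "f > 0" and fa: "f \<le> a"
    and cdef: "int c = int f * int b - int g * int a" and big: "int c \<ge> 2 * int g * int a"
  shows "2 * int (sylvester_p 2 [a,b,c]) = int ((a-1)*(b-1)) + 2 * (\<Sum>s<a. wEF a b f g s)"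
proof (rule core[OF a0 b0 c0 cop cdef])
  fix s assume s: "s < a"
  define q where "q = s div f"
  define Z where "Z = (s + a) div f"
  have fq: "f * q \<le> s" unfolding q_def by (simp add: mult.commute)
  have fZ: "f * Z \<le> s + a" unfolding Z_def by (simp add: mult.commute)
  show "\<exists>p1 p2 p3. p1 \<noteq> p2 \<and> p1 \<noteq> p3 \<and> p2 \<noteq> p3 \<and>
        (\<forall>p\<in>{p1,p2,p3}. f * fst p \<le> s + a * snd p \<and> int b * int (snd p) - int g * int (fst p) \<le> wEF a b f g s)"
  proof (cases "2 \<le> q")
    case True
    have w: "wEF a b f g s = - int g * (int q - 2)" using True unfolding wEF_def q_def by simp
    have v: "f * z \<le> s + a * 0" if "z \<le> q" for z
    proof -
      have "f * z \<le> f * q" by (rule mult_le_mono2[OF that])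
      then have "f * z \<le> s" using fq by (rule le_trans)
      then show ?thesis by simp
    qed
    have W: "int b * int 0 - int g * int z \<le> wEF a b f g s" if "q - 2 \<le> z" for z
    proof -
      have "int g * int (q - 2) \<le> int g * int z" using gmono[OF that] .
      then show ?thesis using w True by (simp add: of_nat_diff algebra_simps)
    qed
    show ?thesis
      apply (rule exI[of _ "(q,0)"], rule exI[of _ "(q-1,0)"], rule exI[of _ "(q-2,0)"])
      using True v[of q] v[of "q-1"] v[of "q-2"] W[of q] W[of "q-1"] W[of "q-2"] by (auto simp: of_nat_diff)
  next
    case False
    have s2: "s < 2 * f"
    proof (rule ccontr)
      assume "\<not> s < 2 * f"
      then have "2 \<le> q" unfolding q_def using f0 by (simp add: le_div_of_mult)
      then show False using False by simp
    qed
    have bZ: "int b - int g * int Z \<ge> 0" unfolding Z_def by (rule bZ_nonneg[OF s2 cdef big f0 fa])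
    show ?thesis
    proof (cases "q = 1")
      case True
      have w: "wEF a b f g s = int b - int g * int Z" using True unfolding wEF_def q_def Z_def by simp
      have f1: "f * 1 \<le> s + a * 0" using fq True by simp
      show ?thesis
        apply (rule exI[of _ "(0,0)"], rule exI[of _ "(1,0)"], rule exI[of _ "(Z,1)"])
        using w f1 fZ bZ by auto
    next
      case q1: False
      then have q0: "q = 0" using False by simp
      have w: "wEF a b f g s = int b - int g * (int Z - 1)" using q0 unfolding wEF_def q_def Z_def by simp
      have Z1: "Z \<ge> 1" unfolding Z_def using f0 fa by (simp add: le_div_of_mult)
      have fZ1: "f * (Z - 1) \<le> s + a * 1" using fZ by (metis diff_le_self le_trans mult_le_mono2 mult_1_right)
      have "int g * int (Z - 1) \<le> int g * int Z" by (rule gmono) simp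
      then have W1: "int b * int 1 - int g * int Z \<le> wEF a b f g s" using w Z1 by (simp add: of_nat_diff algebra_simps)
      have W2: "int b * int 1 - int g * int (Z - 1) \<le> wEF a b f g s" using w Z1 by (simp add: of_nat_diff algebra_simps)
      have W0: "int b * int 0 - int g * int 0 \<le> wEF a b f g s" using w W1 bZ by simp
      show ?thesis
        apply (rule exI[of _ "(0,0)"], rule exI[of _ "(Z,1)"], rule exI[of _ "(Z-1,1)"])
        using Z1 fZ fZ1 W0 W1 W2 by auto
    qed
  qed
next
  fix s assume s: "s < a"
  define q where "q = s div f"
  define Z where "Z = (s + a) div f"
  have mge: "int b * int m - int g * int z \<ge> 0" if "f * z \<le> s + a * m" "m \<ge> 1" for z m
    by (rule W_nonneg[OF s that(1) cdef big f0 that(2)])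
  have mgb: "int b * int m - int g * int z \<ge> int b" if "f * z \<le> s + a * m" "m \<ge> 2" for z m
    by (rule W_ge_b[OF s that(1) cdef big f0 that(2)])
  have z0: "z \<le> q" if "f * z \<le> s + a * 0" for z
    using that f0 unfolding q_def by (simp add: le_div_of_mult)
  have z1: "z \<le> Z" if "f * z \<le> s + a * 1" for z
    using that f0 unfolding Z_def by (simp add: le_div_of_mult)
  show "\<exists>q1 q2. \<forall>z m. f * z \<le> s + a * m \<longrightarrow>
        int b * int m - int g * int z < wEF a b f g s \<longrightarrow> (z,m) = q1 \<or> (z,m) = q2"
  proof (cases "2 \<le> q")
    case True
    have w: "wEF a b f g s = - int g * (int q - 2)" using True unfolding wEF_def q_def by simp
    have "(z,m) = (q-1,0) \<or> (z,m) = (q,0)" if zm: "f * z \<le> s + a * m" "int b * int m - int g * int z < wEF a b f g s" for z m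
    proof (cases "m = 0")
      case True
      have zq: "z \<le> q" using z0 zm True by simp
      have "\<not> z \<le> q - 2"
      proof
        assume "z \<le> q - 2"
        then have "int g * int z \<le> int g * int (q - 2)" by (rule gmono)
        then show False using zm True w \<open>2 \<le> q\<close> by (simp add: of_nat_diff algebra_simps)
      qed
      then have "z = q - 1 \<or> z = q" using zq by auto
      then show ?thesis using True by auto
    next
      case False
      have "int b * int m - int g * int z \<ge> 0" using mge[OF zm(1)] False by simp
      moreover have "wEF a b f g s \<le> 0" using w True by (simp add: mult_nonneg_nonneg)
      ultimately show ?thesis using zm by simp
    qed
    then show ?thesis by blast
  next
    case False
    have s2: "s < 2 * f"
    proof (rule ccontr)
      assume "\<not> s < 2 * f"
      then have "2 \<le> q" unfolding q_def using f0 by (simp add: le_div_of_mult)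
      then show False using False by simp
    qed
    have bZ: "int b - int g * int Z \<ge> 0" unfolding Z_def by (rule bZ_nonneg[OF s2 cdef big f0 fa])
    show ?thesis
    proof (cases "q = 1")
      case True
      have w: "wEF a b f g s = int b - int g * int Z" using True unfolding wEF_def q_def Z_def by simp
      have "(z,m) = (0,0) \<or> (z,m) = (1,0)" if zm: "f * z \<le> s + a * m" "int b * int m - int g * int z < wEF a b f g s" for z m
      proof -
        consider "m = 0" | "m = 1" | "m \<ge> 2" by linarith
        then show ?thesis
        proof cases
          case 1
          then have "z \<le> 1" using z0 zm True by simp
          then show ?thesis using 1 by auto
        next
          case 2
          then have "z \<le> Z" using z1 zm by simp
          then have "int g * int z \<le> int g * int Z" by (rule gmono)
          then show ?thesis using zm 2 w by simp
        next
          case 3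
          have "int b * int m - int g * int z \<ge> int b" using mgb[OF zm(1) 3] .
          moreover have "int g * int Z \<ge> 0" by simp
          ultimately show ?thesis using zm w by simp
        qed
      qed
      then show ?thesis by blast
    next
      case q1: False
      then have q0: "q = 0" using False by simp
      have w: "wEF a b f g s = int b - int g * (int Z - 1)" using q0 unfolding wEF_def q_def Z_def by simp
      have Z1: "Z \<ge> 1" unfolding Z_def using f0 fa by (simp add: le_div_of_mult)
      have "(z,m) = (0,0) \<or> (z,m) = (Z,1)" if zm: "f * z \<le> s + a * m" "int b * int m - int g * int z < wEF a b f g s" for z m
      proof -
        consider "m = 0" | "m = 1" | "m \<ge> 2" by linarith
        then show ?thesis
        proof cases
          case 1
          then have "z \<le> 0" using z0 zm q0 by simp
          then show ?thesis using 1 by auto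
        next
          case 2
          then have zZ: "z \<le> Z" using z1 zm by simp
          have "\<not> z \<le> Z - 1"
          proof
            assume "z \<le> Z - 1"
            then have "int g * int z \<le> int g * int (Z - 1)" by (rule gmono)
            then show False using zm 2 w Z1 by (simp add: of_nat_diff algebra_simps)
          qed
          then have "z = Z" using zZ by simp
          then show ?thesis using 2 by simp
        next
          case 3
          have "int b * int m - int g * int z \<ge> int b" using mgb[OF zm(1) 3] .
          moreover have "int g * (int Z - 1) \<ge> 0" using Z1 by simp
          ultimately show ?thesis using zm w by simp
        qed
      qed
      then show ?thesis by blast
    qed
  qed
qed



definition T :: "nat \<Rightarrow> nat \<Rightarrow> int" where "T f N = (\<Sum>s<N. int (s div f))"

lemma T_add: "T f (N + R) = T f N + (\<Sum>s\<in>{N..<N+R}. int (s div f))"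
proof -
  have u: "{..<N+R} = {..<N} \<union> {N..<N+R}" by auto
  show ?thesis unfolding T_def u by (rule sum.union_disjoint) auto
qed

lemma T_ivl: "A \<le> B \<Longrightarrow> (\<Sum>s\<in>{A..<B}. int (s div f)) = T f B - T f A"
  using T_add[of f A "B - A"] by simp

lemma block: assumes "f > 0" "R \<le> f" shows "(\<Sum>s\<in>{Q*f..<Q*f+R}. int (s div f)) = int R * int Q"
proof -
  have "(\<Sum>s\<in>{Q*f..<Q*f+R}. int (s div f)) = (\<Sum>s\<in>{Q*f..<Q*f+R}. int Q)"
  proof (rule sum.cong)
    fix s assume "s \<in> {Q*f..<Q*f+R}"
    then have "f * Q \<le> s" "s < f * Suc Q" using assms by (auto simp: algebra_simps)
    then show "int (s div f) = int Q" by (simp add: div_nat_eqI)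
  qed simp
  then show ?thesis by simp
qed

lemma T_Q: "f > 0 \<Longrightarrow> 2 * T f (Q*f) = int f * int Q * (int Q - 1)"
proof (induction Q)
  case 0 then show ?case by (simp add: T_def)
next
  case (Suc Q)
  have "T f (Suc Q * f) = T f (Q*f) + int f * int Q"
    using T_add[of f "Q*f" f] block[OF Suc.prems, of f Q] by (simp add: add.commute)
  then show ?case using Suc by (simp add: algebra_simps)
qed

lemma T_QR: "f > 0 \<Longrightarrow> R \<le> f \<Longrightarrow> 2 * T f (Q*f + R) = int f * int Q * (int Q - 1) + 2 * int R * int Q"
  using T_add[of f "Q*f" R] block[of f R Q] T_Q[of f Q] by simp

lemma sum_shift:
  fixes h :: "nat \<Rightarrow> int"
  shows "(\<Sum>s<n. h (s + k)) = (\<Sum>t\<in>{k..<n+k}. h t)"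
  using sum.shift_bounds_nat_ivl[of h 0 k n] by (simp add: atLeast0LessThan)



lemma sum_shift2:
  fixes h :: "nat \<Rightarrow> int"
  shows "(\<Sum>s\<in>{m..<n}. h (s + k)) = (\<Sum>t\<in>{m+k..<n+k}. h t)"
  using sum.shift_bounds_nat_ivl[of h m k n] by simp

lemma sumE:
  fixes a b f g :: nat
  assumes f0: "f > 0" and fa: "f < a" and a2f: "a \<le> 2 * f" and f3: "3 * f \<le> 2 * a"
  shows "(\<Sum>s<a. wEF a b f g s) = int a * int b - int g * (5 * int a - 6 * int f)"
proof -
  have u: "{..<a} = {..<f} \<union> {f..<a}" using fa by auto
  have S: "(\<Sum>s<a. wEF a b f g s) = (\<Sum>s<f. wEF a b f g s) + (\<Sum>s\<in>{f..<a}. wEF a b f g s)"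
    unfolding u by (rule sum.union_disjoint) auto
  have P1: "(\<Sum>s<f. wEF a b f g s) = (\<Sum>s<f. int b + int g - int g * int ((s + a) div f))"
    by (rule sum.cong) (auto simp: wEF_def algebra_simps)
  have P1b: "(\<Sum>s<f. int ((s + a) div f)) = T f (f + a) - T f a"
    using sum_shift[where h="\<lambda>t. int (t div f)" and n=f and k=a] T_ivl[of a "f + a" f] by simp
  have P2: "(\<Sum>s\<in>{f..<a}. wEF a b f g s) = (\<Sum>s\<in>{f..<a}. int b - int g * int ((s + a) div f))"
  proof (rule sum.cong)
    fix s assume "s \<in> {f..<a}"
    then have "s div f = 1" using f0 a2f by (intro div_nat_eqI) auto
    then show "wEF a b f g s = int b - int g * int ((s + a) div f)" by (simp add: wEF_def)
  qed simp
  have P2b: "(\<Sum>s\<in>{f..<a}. int ((s + a) div f)) = T f (a + a) - T f (f + a)"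
    using sum_shift2[of "\<lambda>t. int (t div f)" a f a] T_ivl[of "f + a" "a + a" f] fa by simp
  have Ta: "2 * T f a = 2 * int (a - f)"
    using T_QR[of f "a - f" 1] f0 fa a2f by simp
  have Taf: "2 * T f (f + a) = 2 * int f + 4 * int (a - f)"
    using T_QR[of f "a - f" 2] f0 fa a2f by (simp add: algebra_simps)
  have T2a: "2 * T f (a + a) = 6 * int f + 6 * int (2*a - 3*f)"
  proof -
    have le: "2*a - 3*f \<le> f" using a2f by linarith
    have eq: "3*f + (2*a - 3*f) = a + a" using f3 by linarith
    show ?thesis using T_QR[OF f0 le, of 3] unfolding eq by simp
  qed
  have "2 * (\<Sum>s<a. wEF a b f g s)
      = 2 * (int f * (int b + int g) - int g * (T f (f + a) - T f a))
        + 2 * (int (a - f) * int b - int g * (T f (a + a) - T f (f + a)))"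
    unfolding S P1 P2
    by (simp add: sum_subtractf sum_distrib_left[symmetric] P1b P2b algebra_simps)
  also have "\<dots> = 2 * int f * int b + 2 * int g * int f + 2 * int (a - f) * int b - int g * (2 * T f (a + a)) + int g * (2 * T f a)"
    by (simp add: algebra_simps)
  also have "\<dots> = 2 * (int a * int b - int g * (5 * int a - 6 * int f))"
    unfolding T2a Ta using fa f3 by (simp add: of_nat_diff algebra_simps)
  finally show ?thesis by simp
qed



lemma sumF:
  fixes a b f g :: nat
  assumes f0: "f > 0" and fa: "2 * f < a"
  defines "r \<equiv> (a - 1) div f"
  shows "2 * (\<Sum>s<a. wEF a b f g s) = 4 * int f * int b - int g * (2 * int r * int a - int f * (int r + 3) * (int r - 2))"
proof -
  define R0 where "R0 = a - r * f"
  have rf1: "r * f \<le> a - 1" unfolding r_def by simp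
  have rf2: "a - 1 < (r + 1) * f"
  proof -
    have "a - 1 = r*f + (a-1) mod f" unfolding r_def by simp
    moreover have "(a-1) mod f < f" using f0 by simp
    ultimately show ?thesis by simp
  qed
  have R0a: "a = r * f + R0" and R01: "R0 \<le> f" using rf1 rf2 fa unfolding R0_def by auto
  have u: "{..<a} = {..<f} \<union> ({f..<2*f} \<union> {2*f..<a})" using fa by auto
  have S: "(\<Sum>s<a. wEF a b f g s) = (\<Sum>s<f. wEF a b f g s) + ((\<Sum>s\<in>{f..<2*f}. wEF a b f g s) + (\<Sum>s\<in>{2*f..<a}. wEF a b f g s))"
    unfolding u by (subst sum.union_disjoint, auto, subst sum.union_disjoint, auto)
  have P1: "(\<Sum>s<f. wEF a b f g s) = (\<Sum>s<f. int b + int g - int g * int ((s + a) div f))"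
    by (rule sum.cong) (auto simp: wEF_def algebra_simps)
  have P1b: "(\<Sum>s<f. int ((s + a) div f)) = T f (f + a) - T f a"
    using sum_shift[where h="\<lambda>t. int (t div f)" and n=f and k=a] T_ivl[of a "f + a" f] by simp
  have P2: "(\<Sum>s\<in>{f..<2*f}. wEF a b f g s) = (\<Sum>s\<in>{f..<2*f}. int b - int g * int ((s + a) div f))"
  proof (rule sum.cong)
    fix s assume "s \<in> {f..<2*f}"
    then have "s div f = 1" using f0 by (intro div_nat_eqI) auto
    then show "wEF a b f g s = int b - int g * int ((s + a) div f)" by (simp add: wEF_def)
  qed simp
  have P2b: "(\<Sum>s\<in>{f..<2*f}. int ((s + a) div f)) = T f (2*f + a) - T f (f + a)"
    using sum_shift2[of "\<lambda>t. int (t div f)" a f "2*f"] T_ivl[of "f + a" "2*f + a" f] by simp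
  have P3: "(\<Sum>s\<in>{2*f..<a}. wEF a b f g s) = (\<Sum>s\<in>{2*f..<a}. 2 * int g - int g * int (s div f))"
  proof (rule sum.cong)
    fix s assume "s \<in> {2*f..<a}"
    then have "2 \<le> s div f" using f0 by (simp add: le_div_of_mult)
    then show "wEF a b f g s = 2 * int g - int g * int (s div f)" by (simp add: wEF_def algebra_simps)
  qed simp
  have P3b: "(\<Sum>s\<in>{2*f..<a}. int (s div f)) = T f a - T f (2*f)"
    using T_ivl[of "2*f" a f] fa by simp
  have T2f: "2 * T f (2*f) = 2 * int f" using T_Q[OF f0, of 2] by (simp add: mult.commute)
  have Ta: "2 * T f a = int f * int r * (int r - 1) + 2 * int R0 * int r"
    using T_QR[OF f0 R01, of r] R0a by simp
  have Taf: "2 * T f (f + a) = int f * int (r+1) * (int (r+1) - 1) + 2 * int R0 * int (r+1)"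
  proof -
    have eq: "(r+1)*f + R0 = f + a" using R0a by (simp add: algebra_simps)
    show ?thesis using T_QR[OF f0 R01, of "r+1"] unfolding eq by simp
  qed
  have Ta2f: "2 * T f (2*f + a) = int f * int (r+2) * (int (r+2) - 1) + 2 * int R0 * int (r+2)"
  proof -
    have eq: "(r+2)*f + R0 = 2*f + a" using R0a by (simp add: algebra_simps)
    show ?thesis using T_QR[OF f0 R01, of "r+2"] unfolding eq by simp
  qed
  have aa: "int a = int r * int f + int R0" using R0a by simp
  have card3: "card {2*f..<a} = a - 2*f" by simp
  have "2 * (\<Sum>s<a. wEF a b f g s)
      = 2 * (int f * (int b + int g) - int g * (T f (f + a) - T f a))
        + 2 * (int f * int b - int g * (T f (2*f + a) - T f (f + a)))
        + 2 * (int (a - 2*f) * (2 * int g) - int g * (T f a - T f (2*f)))"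
    unfolding S P1 P2 P3
    by (simp only: sum_subtractf sum_distrib_left[symmetric] P1b P2b P3b) (simp add: algebra_simps)
  also have "\<dots> = 4 * int f * int b + 2 * int g * int f + 4 * int g * (int a - 2 * int f)
       - int g * (2 * T f (2*f + a)) + int g * (2 * T f (2*f))"
  proof -
    have "int (a - 2*f) = int a - 2 * int f" using fa by simp
    then show ?thesis by (simp add: algebra_simps)
  qed
  also have "\<dots> = 4 * int f * int b - int g * (2 * int r * int a - int f * (int r + 3) * (int r - 2))"
    unfolding Ta2f T2f aa by (simp add: algebra_simps)
  finally show ?thesis .
qed




lemma fibG:
  assumes "2 \<le> k"
  shows "int (fib (n + k)) = int (fib k) * int (fib (n + 2)) - int (fib (k - 2)) * int (fib n)"
proof -
  obtain l where k: "k = l + 2" using assms by (metis add.commute le_Suc_ex)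
  have A: "fib (Suc (n + 1 + l)) = fib (Suc l) * fib (Suc (n + 1)) + fib l * fib (n + 1)" by (rule fib_add)
  have B: "fib (l + 2) = fib (l + 1) + fib l" by (rule fib_plus_2)
  have C: "fib (n + 2) = fib (n + 1) + fib n" by (rule fib_plus_2)
  have D: "n + k = Suc (n + 1 + l)" using k by simp
  show ?thesis unfolding D using A B C k by (simp add: algebra_simps)
qed

lemma fib_xy:
  fixes j :: nat
  defines "x \<equiv> int (fib j)" and "y \<equiv> int (fib (j+1))"
  shows "int (fib (j+2)) = x + y" "int (fib (j+3)) = x + 2*y" "int (fib (j+4)) = 2*x + 3*y"
    "int (fib (j+5)) = 3*x + 5*y" "int (fib (j+6)) = 5*x + 8*y"
  unfolding x_def y_def by (simp_all add: numeral_eq_Suc)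



theorem theorem11:
  fixes i k :: nat
  assumes "i \<ge> 3" and "k \<ge> 3"
  defines "F \<equiv> (\<lambda>m. int (fib m))"
  shows "(k \<ge> i + 3 \<longrightarrow>
           2 * int (sylvester_p 2 [fib i, fib (i+2), fib (i+k)])
             = 5 * F i * F (i+2) - F i - F (i+2) + 1)
       \<and> 2 * int (sylvester_p 2 [fib i, fib (i+2), fib (2*i+2)])
             = (7 * F (i+2) - 6 * F i - 1) * F i - F (i+2) + 1
       \<and> 2 * int (sylvester_p 2 [fib i, fib (i+2), fib (2*i+1)])
             = (7 * F (i+2) - 8 * F i - 1) * F i - F (i+2) + 1
       \<and> 2 * int (sylvester_p 2 [fib i, fib (i+2), fib (2*i)])
             = 3 * F i * F (i+2) - F i - F (i+2) + 1
       \<and> 2 * int (sylvester_p 2 [fib i, fib (i+2), fib (2*i-1)])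
             = (170 * F i - 1) * F i + (24 * F (i+2) - 125 * F i - 1) * F (i+2) + 1
       \<and> (\<forall>r::int. r = (F i - 1) div F k \<longrightarrow> r \<ge> 2 \<longrightarrow>
           2 * int (sylvester_p 2 [fib i, fib (i+2), fib (i+k)])
             = ((F i + 4 * F k - 1) * F (i+2) - F i + 1)
               - (2 * r * F i - (r + 3) * (r - 2) * F k) * F (k - 2))"

proof -
  obtain j where ij: "i = j + 3" using assms(1) by (metis add.commute le_add_diff_inverse)
  define x where "x = int (fib j)"
  define y where "y = int (fib (j+1))"
  have x0: "x \<ge> 0" unfolding x_def by simp
  have y1: "y \<ge> 1" unfolding y_def using fib_neq_0_nat[of "j+1"] by simp
  have xy: "x \<le> y" unfolding x_def y_def using fib_Suc_mono[of j] by simp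
  note fx = fib_xy[of j, folded x_def y_def]
  have Fa: "int (fib i) = x + 2*y" using fx ij by simp
  have Fb: "int (fib (i+2)) = 3*x + 5*y"
  proof -
    have e: "i+2 = j+5" using ij by simp
    show ?thesis unfolding e by (rule fx(4))
  qed
  have Fe: "int (fib (i-1)) = x + y" using fx ij by simp
  have Fa1: "int (fib (i+1)) = 2*x + 3*y"
  proof -
    have e: "i+1 = j+4" using ij by simp
    show ?thesis unfolding e by (rule fx(3))
  qed
  have Fa3: "int (fib (i+3)) = 5*x + 8*y"
  proof -
    have e: "i+3 = j+6" using ij by simp
    show ?thesis unfolding e by (rule fx(5))
  qed
  have Fm2: "int (fib (i-2)) = y" using ij y_def by simp
  have Fm3: "int (fib (i-3)) = x" using ij x_def by simp
  have a0: "fib i > 0" using assms(1) by (simp add: fib_neq_0_nat)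
  have b0: "fib (i+2) > 0" by (simp add: fib_neq_0_nat)
  have cop: "coprime (fib i) (fib (i+2))"
    using gcd_fib_add[of i 2] by (simp add: coprime_iff_gcd_eq_1 add.commute)
  have ab1: "int ((fib i - 1) * (fib (i+2) - 1)) = (F i - 1) * (F (i+2) - 1)"
    using a0 b0 unfolding F_def by (simp add: of_nat_diff)
  have pos: "\<And>m. m > 0 \<Longrightarrow> fib m > 0" by (simp add: fib_neq_0_nat)
  have PA: "k \<ge> i + 3 \<longrightarrow>
           2 * int (sylvester_p 2 [fib i, fib (i+2), fib (i+k)])
             = 5 * F i * F (i+2) - F i - F (i+2) + 1"
  proof
    assume ki: "k \<ge> i + 3"
    have cd: "int (fib (i+k)) = int (fib k) * int (fib (i+2)) - int (fib (k-2)) * int (fib i)"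
      using fibG[of k i] ki by simp
    have m: "fib (i + (i+3)) \<le> fib (i+k)" using ki by (intro fib_mono) simp
    have "int (fib (i + (i+3))) = int (fib (i+3)) * int (fib (i+2)) - int (fib (i+1)) * int (fib i)"
      using fibG[of "i+3" i] by simp
    also have "\<dots> = (5*x+8*y)*(3*x+5*y) - (2*x+3*y)*(x+2*y)" using Fa3 Fb Fa1 Fa by simp
    finally have e1: "int (fib (i + (i+3))) = (5*x+8*y)*(3*x+5*y) - (2*x+3*y)*(x+2*y)" .
    have e2: "(5*x+8*y)*(3*x+5*y) - (2*x+3*y)*(x+2*y) - (3 * (x+2*y) * (3*x+5*y) - (3*x+5*y))
        = 4*(x*x) + 9*(x*y) + 4*(y*y) + 3*x + 5*y" by (simp add: algebra_simps)
    have "x*x \<ge> 0" "x*y \<ge> 0" "y*y \<ge> 0" using x0 y1 by auto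
    then have big: "int (fib (i+k)) \<ge> 3 * int (fib i) * int (fib (i+2)) - int (fib (i+2))"
      using m e1 e2 Fa Fb x0 y1 by (smt (verit) of_nat_le_iff)
    have "2 * int (sylvester_p 2 [fib i, fib (i+2), fib (i+k)])
        = int ((fib i - 1) * (fib (i+2) - 1)) + 4 * int (fib i) * int (fib (i+2))"
      by (rule shapeA[OF a0 b0 pos cop cd big]) (use assms in simp)
    then show "2 * int (sylvester_p 2 [fib i, fib (i+2), fib (i+k)])
             = 5 * F i * F (i+2) - F i - F (i+2) + 1"
      unfolding ab1 by (simp add: F_def algebra_simps)
  qed
  have PB: "2 * int (sylvester_p 2 [fib i, fib (i+2), fib (2*i+2)])
             = (7 * F (i+2) - 6 * F i - 1) * F i - F (i+2) + 1"
  proof -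
    have "int (fib (i + (i+2))) = int (fib (i+2)) * int (fib (i+2)) - int (fib i) * int (fib i)"
      using fibG[of "i+2" i] by simp
    also have "\<dots> = int (fib (i-1)) * int (fib (i+2)) + int (fib (i+3)) * int (fib i)"
      unfolding Fa Fb Fe Fa3 by (simp add: algebra_simps)
    finally have cd: "int (fib (2*i+2)) = int (fib (i-1)) * int (fib (i+2)) + int (fib (i+3)) * int (fib i)"
      by (simp only: mult_2 add.assoc)
    have ea: "fib (i-1) \<le> fib i" by (rule fib_mono) simp
    have bh: "fib (i+2) \<le> fib (i+3)" by (rule fib_mono) simp
    have hb: "fib (i+3) \<le> 2 * fib (i+2)"
    proof -
      have "int (fib (i+3)) \<le> int (2 * fib (i+2))" using Fa3 Fb x0 y1 by simp
      then show ?thesis by linarith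
    qed
    have "2 * int (sylvester_p 2 [fib i, fib (i+2), fib (2*i+2)])
        = int ((fib i - 1) * (fib (i+2) - 1)) + 2 * (int (fib (i-1)) * (2 * int (fib (i+2))) + int (fib i - fib (i-1)) * int (fib (i+3)))"
      by (rule shapeB[OF a0 b0 pos cop cd ea bh hb]) (use assms in simp)
    moreover have "int (fib i - fib (i-1)) = y" using ea Fa Fe by (simp add: of_nat_diff)
    ultimately show ?thesis unfolding ab1 unfolding F_def using Fa Fb Fe Fa3 by (simp add: algebra_simps)
  qed
  have PC: "2 * int (sylvester_p 2 [fib i, fib (i+2), fib (2*i+1)])
             = (7 * F (i+2) - 8 * F i - 1) * F i - F (i+2) + 1"
  proof -
    have "int (fib (i + (i+1))) = int (fib (i+1)) * int (fib (i+2)) - int (fib (i-1)) * int (fib i)"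
      using fibG[of "i+1" i] assms(1) by simp
    also have "\<dots> = int (fib (i-1)) * int (fib (i+2)) + 2 * int (fib i) * int (fib i)"
      unfolding Fa Fb Fe Fa1 by (simp add: algebra_simps)
    finally have cd: "int (fib (2*i+1)) = int (fib (i-1)) * int (fib (i+2)) + 2 * int (fib i) * int (fib i)"
      by (simp only: mult_2 add.assoc)
    have ea: "fib (i-1) \<le> fib i" by (rule fib_mono) simp
    have ab: "2 * fib i \<le> fib (i+2)"
    proof -
      have "int (2 * fib i) \<le> int (fib (i+2))" using Fa Fb x0 y1 by simp
      then show ?thesis by linarith
    qed
    have ba: "fib (i+2) \<le> 4 * fib i"
    proof -
      have "int (fib (i+2)) \<le> int (4 * fib i)" using Fa Fb x0 y1 xy by simp
      then show ?thesis by linarith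
    qed
    have "2 * int (sylvester_p 2 [fib i, fib (i+2), fib (2*i+1)])
        = int ((fib i - 1) * (fib (i+2) - 1)) + 2 * (int (fib (i-1)) * (2 * int (fib i) + int (fib (i+2))) + int (fib i - fib (i-1)) * int (fib (i+2)))"
      by (rule shapeC[OF a0 b0 pos cop cd ea ab ba]) (use assms in simp)
    moreover have "int (fib i - fib (i-1)) = y" using ea Fa Fe by (simp add: of_nat_diff)
    ultimately show ?thesis unfolding ab1 unfolding F_def using Fa Fb Fe by (simp add: algebra_simps)
  qed
  have PD: "2 * int (sylvester_p 2 [fib i, fib (i+2), fib (2*i)])
             = 3 * F i * F (i+2) - F i - F (i+2) + 1"
  proof -
    have "int (fib (i + i)) = int (fib i) * int (fib (i+2)) - int (fib (i-2)) * int (fib i)"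
      using fibG[of i i] assms(1) by simp
    also have "\<dots> = int (fib (i-1) + fib (i+1)) * int (fib i)"
      unfolding of_nat_add Fa Fb Fe Fa1 Fm2 by (simp add: algebra_simps)
    finally have cd: "int (fib (2*i)) = int (fib (i-1) + fib (i+1)) * int (fib i)"
      by (simp only: mult_2)
    have Lb: "fib (i-1) + fib (i+1) \<le> fib (i+2)"
    proof -
      have "int (fib (i-1) + fib (i+1)) \<le> int (fib (i+2))" using Fe Fa1 Fb x0 y1 by simp
      then show ?thesis by linarith
    qed
    have bL: "fib (i+2) \<le> 2 * (fib (i-1) + fib (i+1))"
    proof -
      have "int (fib (i+2)) \<le> int (2 * (fib (i-1) + fib (i+1)))" using Fe Fa1 Fb x0 y1 by simp
      then show ?thesis by linarith
    qed
    have "2 * int (sylvester_p 2 [fib i, fib (i+2), fib (2*i)])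
        = int ((fib i - 1) * (fib (i+2) - 1)) + 2 * int (fib i) * int (fib (i+2))"
      by (rule shapeD[OF a0 b0 pos cop cd Lb bL]) (use assms in simp)
    then show ?thesis unfolding ab1 unfolding F_def by (simp add: algebra_simps)
  qed
  have PE: "2 * int (sylvester_p 2 [fib i, fib (i+2), fib (2*i-1)])
             = (170 * F i - 1) * F i + (24 * F (i+2) - 125 * F i - 1) * F (i+2) + 1"
  proof -
    have ii: "i + (i - 1) = 2*i - 1" using assms(1) by simp
    have cd: "int (fib (2*i-1)) = int (fib (i-1)) * int (fib (i+2)) - int (fib (i-3)) * int (fib i)"
      using fibG[of "i-1" i] assms(1) unfolding ii by (simp add: numeral_eq_Suc)
    have f0: "fib (i-1) > 0" using assms(1) by (simp add: fib_neq_0_nat)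
    have fa: "fib (i-1) < fib i"
    proof -
      have "int (fib (i-1)) < int (fib i)" using Fe Fa y1 by simp
      then show ?thesis by linarith
    qed
    have a2f: "fib i \<le> 2 * fib (i-1)"
    proof -
      have "int (fib i) \<le> int (2 * fib (i-1))" using Fe Fa x0 by simp
      then show ?thesis by linarith
    qed
    have f3: "3 * fib (i-1) \<le> 2 * fib i"
    proof -
      have "int (3 * fib (i-1)) \<le> int (2 * fib i)" using Fe Fa xy by simp
      then show ?thesis by linarith
    qed
    have big: "int (fib (2*i-1)) \<ge> 2 * int (fib (i-3)) * int (fib i)"
    proof -
      have "int (fib (2*i-1)) - 2 * int (fib (i-3)) * int (fib i) = 2*(x*y) + 5*(y*y)"
        unfolding cd using Fe Fb Fm3 Fa by (simp add: algebra_simps)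
      moreover have "x*y \<ge> 0" "y*y \<ge> 0" using x0 y1 by auto
      ultimately show ?thesis by linarith
    qed
    have "2 * int (sylvester_p 2 [fib i, fib (i+2), fib (2*i-1)])
        = int ((fib i - 1) * (fib (i+2) - 1)) + 2 * (\<Sum>s<fib i. wEF (fib i) (fib (i+2)) (fib (i-1)) (fib (i-3)) s)"
      by (rule shapeEF[OF a0 b0 pos cop f0 _ cd big]) (use fa assms in simp_all)
    also have "(\<Sum>s<fib i. wEF (fib i) (fib (i+2)) (fib (i-1)) (fib (i-3)) s)
        = int (fib i) * int (fib (i+2)) - int (fib (i-3)) * (5 * int (fib i) - 6 * int (fib (i-1)))"
      by (rule sumE[OF f0 fa a2f f3])
    finally show ?thesis unfolding ab1 unfolding F_def using Fa Fb Fe Fm3 by (simp add: algebra_simps)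
  qed
  have PF: "\<forall>r::int. r = (F i - 1) div F k \<longrightarrow> r \<ge> 2 \<longrightarrow>
           2 * int (sylvester_p 2 [fib i, fib (i+2), fib (i+k)])
             = ((F i + 4 * F k - 1) * F (i+2) - F i + 1)
               - (2 * r * F i - (r + 3) * (r - 2) * F k) * F (k - 2)"
  proof (intro allI impI)
    fix r :: int
    assume rdef: "r = (F i - 1) div F k" and r2: "r \<ge> 2"
    define rn where "rn = (fib i - 1) div fib k"
    have rr: "r = int rn" unfolding rdef rn_def F_def using a0 by (simp add: zdiv_int of_nat_diff)
    have f0: "fib k > 0" using assms(2) by (simp add: fib_neq_0_nat)
    have "2 \<le> rn" using rr r2 by simp
    then have "2 * fib k \<le> fib i - 1" unfolding rn_def using f0 by (simp add: less_eq_div_iff_mult_less_eq mult.commute)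
    then have fa2: "2 * fib k < fib i" using a0 by linarith
    then have fa: "fib k \<le> fib i" by simp
    have cd: "int (fib (i+k)) = int (fib k) * int (fib (i+2)) - int (fib (k-2)) * int (fib i)"
      using fibG[of k i] assms(2) by simp
    have fk: "fib k \<ge> 2 * fib (k-2)"
    proof -
      define l where "l = k - 2"
      have kl: "k = l + 2" using assms(2) unfolding l_def by simp
      have "fib (l+2) = fib (l+1) + fib l" by (rule fib_plus_2)
      moreover have "fib l \<le> fib (l+1)" by (rule fib_mono) simp
      ultimately show ?thesis unfolding kl by simp
    qed
    have ba: "2 * fib i \<le> fib (i+2)"
    proof -
      have "int (2 * fib i) \<le> int (fib (i+2))" using Fa Fb x0 y1 by simp
      then show ?thesis by linarith
    qed
    have "(2 * fib (k-2)) * (2 * fib i) \<le> fib k * fib (i+2)" using fk ba by (rule mult_mono) simp_all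
    moreover have eq: "(2 * fib (k-2)) * (2 * fib i) = 4 * (fib (k-2) * fib i)" by simp
    ultimately have "4 * (fib (k-2) * fib i) \<le> fib k * fib (i+2)" by (simp only:)
    then have "int (4 * (fib (k-2) * fib i)) \<le> int (fib k * fib (i+2))" by (simp only: of_nat_le_iff)
    then have h2: "4 * (int (fib (k-2)) * int (fib i)) \<le> int (fib k) * int (fib (i+2))"
      by (simp only: of_nat_mult of_nat_numeral)
    have "int (fib (k-2)) * int (fib i) \<ge> 0" by simp
    then have big: "int (fib (i+k)) \<ge> 2 * int (fib (k-2)) * int (fib i)"
      unfolding cd using h2 by linarith
    have "2 * int (sylvester_p 2 [fib i, fib (i+2), fib (i+k)])
        = int ((fib i - 1) * (fib (i+2) - 1)) + 2 * (\<Sum>s<fib i. wEF (fib i) (fib (i+2)) (fib k) (fib (k-2)) s)"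
      by (rule shapeEF[OF a0 b0 pos cop f0 fa cd big]) (use assms in simp)
    also have "2 * (\<Sum>s<fib i. wEF (fib i) (fib (i+2)) (fib k) (fib (k-2)) s)
        = 4 * int (fib k) * int (fib (i+2)) - int (fib (k-2)) * (2 * int rn * int (fib i) - int (fib k) * (int rn + 3) * (int rn - 2))"
      unfolding rn_def by (rule sumF[OF f0 fa2])
    finally show "2 * int (sylvester_p 2 [fib i, fib (i+2), fib (i+k)])
             = ((F i + 4 * F k - 1) * F (i+2) - F i + 1)
               - (2 * r * F i - (r + 3) * (r - 2) * F k) * F (k - 2)"
      unfolding ab1 rr unfolding F_def by (simp add: algebra_simps)
  qed
  show ?thesis using PA PB PC PD PE PF by blast
qed

end
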